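(* Let $X$ be a normed space and $X_1\subset X_2\subset\cdots$ an increasing sequence of finite dimensional subspaces with $\bigcup_n X_n$ dense in $X$. Let $\rho$ be an accumulation point of the sequence $(r(S_{X_n}))_n$. Then $\rho\in\mathcal{R}(X)$.
   Context: For a normed space $Z$ with unit sphere $S_Z$ and kernel $\|x-y\|$, $R(S_Z):=\bigcap_{m\in\mathbb{N}}\bigcap_{w_1,\dots,w_m\in S_Z}\overline{\mathrm{conv}}\{\frac1m\sum_{j=1}^m\|x-w_j\|:x\in S_Z\}$ and $\mathcal{R}(X):=R(S_X)$. For finite dimensional $X_n$ (with the norm of $X$ restricted), $S_{X_n}$ is compact and $R(S_{X_n})$ consists of exactly one number (a known fact), denoted $r(S_{X_n})$. *)

theory Defs
  imports "HOL-Analysis.Analysis"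
begin

definition R_set :: "'a::real_normed_vector set \<Rightarrow> real set" where
  "R_set S = (\<Inter>m\<in>{m::nat. m \<ge> 1}. \<Inter>w\<in>{w::nat \<Rightarrow> 'a. \<forall>j<m. w j \<in> S}.
      closure (convex hull ((\<lambda>x. (\<Sum>j<m. norm (x - w j)) / real m) ` S)))"

text \<open>The unique element of R(S) (meaningful when R(S) is a singleton,
  e.g. for the unit sphere of a finite dimensional subspace).\<close>
definition r_num :: "'a::real_normed_vector set \<Rightarrow> real" where
  "r_num S = (THE \<rho>. R_set S = {\<rho>})"

definition unit_sphere_of :: "'a::real_normed_vector set \<Rightarrow> 'a set" where
  "unit_sphere_of V = sphere 0 1 \<inter> V"

definition calR :: "'a::real_normed_vector itself \<Rightarrow> real set" where
  "calR _ = R_set (sphere (0::'a) 1)"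

end

theory Submission
  imports Defs
begin


lemma compact_cube:
  "compact (PiE UNIV (\<lambda>b::'a. if b \<in> B then {-M..M} else {0::real}))"
proof -
  have "compactin (product_topology (\<lambda>i. euclidean) UNIV) (PiE UNIV (\<lambda>b::'a. if b \<in> B then {-M..M} else {0::real}))"
    unfolding compactin_PiE by auto
  then show ?thesis by (simp add: euclidean_product_topology)
qed

lemma coord_cont [continuous_intros]: "continuous_on S (\<lambda>c. c b)"
  by (rule continuous_on_subset[OF continuous_on_product_coordinates]) simp

lemma closed_sphere_gen: "closed (sphere (a::'a::metric_space) r)"
proof -
  have "closed {x. dist a x = r}" by (intro closed_Collect_eq continuous_intros)
  then show ?thesis by (simp add: sphere_def)
qed

lemma findim_compact_indep:
  fixes B :: "'a::real_normed_vector set"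
  assumes ind: "independent B" and finB: "finite B"
  shows "compact (sphere 0 1 \<inter> span B)"
proof (cases "B = {}")
  case True
  then show ?thesis by auto
next
  case False
  define L where "L = (\<lambda>c::'a\<Rightarrow>real. \<Sum>b\<in>B. c b *\<^sub>R b)"
  have contL: "continuous_on UNIV L" unfolding L_def
    by (intro continuous_intros)
  define Cube where "Cube = (\<lambda>M. PiE UNIV (\<lambda>b::'a. if b \<in> B then {-M..M} else {0::real}))"
  define K where "K = Cube 1 \<inter> (\<Union>b\<in>B. {c. \<bar>c b\<bar> = 1})"
  have "closed (\<Union>b\<in>B. {c::'a\<Rightarrow>real. \<bar>c b\<bar> = 1})"
    using finB
  proof -
    have cl: "\<And>b. closed {c::'a\<Rightarrow>real. \<bar>c b\<bar> = 1}"
      by (rule closed_Collect_eq) (intro continuous_intros)+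
    show ?thesis by (rule closed_UN[OF finB]) (use cl in blast)
  qed
  then have cK: "compact K" unfolding K_def Cube_def by (intro compact_Int_closed compact_cube)
  obtain b0 where b0: "b0 \<in> B" using False by auto
  have "(\<lambda>b. if b = b0 then 1 else 0) \<in> K" unfolding K_def Cube_def using b0 by auto
  then have neK: "K \<noteq> {}" by auto
  have "continuous_on K (\<lambda>c. norm (L c))"
    by (intro continuous_intros continuous_on_subset[OF contL]) auto
  then obtain c0 where c0: "c0 \<in> K" and c0min: "\<And>c. c \<in> K \<Longrightarrow> norm (L c0) \<le> norm (L c)"
    using continuous_attains_inf[OF cK neK] by blast
  define \<delta> where "\<delta> = norm (L c0)"
  have "\<delta> > 0"
  proof (rule ccontr)
    assume "\<not> \<delta> > 0"
    then have "L c0 = 0" unfolding \<delta>_def by simp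
    then have "\<forall>b\<in>B. c0 b = 0" using ind finB real_vector.independent_explicit_module[of B] unfolding L_def by blast
    with c0 show False unfolding K_def by auto
  qed
  have sub: "sphere 0 1 \<inter> span B \<subseteq> L ` Cube (1/\<delta>)"
  proof
    fix x assume x: "x \<in> sphere 0 1 \<inter> span B"
    then obtain u where u: "x = (\<Sum>b\<in>B. u b *\<^sub>R b)" using span_finite[OF finB] by auto
    define c where "c = (\<lambda>b. if b \<in> B then u b else 0)"
    have Lc: "L c = x" unfolding L_def c_def u by (intro sum.cong) auto
    define Mx where "Mx = Max ((\<lambda>b. \<bar>c b\<bar>) ` B)"
    have Mxge: "\<And>b. b \<in> B \<Longrightarrow> \<bar>c b\<bar> \<le> Mx" unfolding Mx_def using finB by auto
    have "Mx \<in> (\<lambda>b. \<bar>c b\<bar>) ` B" unfolding Mx_def using finB False by (intro Max_in) auto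
    then obtain b1 where b1: "b1 \<in> B" "\<bar>c b1\<bar> = Mx" by auto
    have "Mx \<noteq> 0"
    proof
      assume "Mx = 0"
      then have "\<forall>b\<in>B. c b = 0" using Mxge by force
      then have "L c = 0" unfolding L_def by simp
      with Lc x show False by simp
    qed
    then have Mxpos: "Mx > 0" using b1 by auto
    have bnd: "\<And>b. b \<in> B \<Longrightarrow> c b / Mx \<in> {-1..1}"
    proof -
      fix b assume "b \<in> B"
      then have "\<bar>c b\<bar> \<le> Mx" by (rule Mxge)
      then have "\<bar>c b / Mx\<bar> \<le> 1" using Mxpos by (simp add: abs_divide)
      then show "c b / Mx \<in> {-1..1}" unfolding atLeastAtMost_iff by linarith
    qed
    have "\<bar>c b1 / Mx\<bar> = 1" using b1 Mxpos by (simp add: abs_divide)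
    then have "(\<lambda>b. c b / Mx) \<in> K"
      unfolding K_def Cube_def using bnd b1 by (auto simp: c_def PiE_iff)
    then have "\<delta> \<le> norm (L (\<lambda>b. c b / Mx))" unfolding \<delta>_def by (rule c0min)
    also have "L (\<lambda>b. c b / Mx) = (1/Mx) *\<^sub>R L c" unfolding L_def by (simp add: scaleR_sum_right)
    finally have "\<delta> \<le> 1 / Mx" using Lc x Mxpos by simp
    then have "Mx \<le> 1/\<delta>" using Mxpos \<open>\<delta> > 0\<close> by (simp add: field_simps)
    then have bnd2: "\<And>b. b \<in> B \<Longrightarrow> c b \<in> {-(1/\<delta>)..1/\<delta>}"
    proof -
      fix b assume "b \<in> B" "Mx \<le> 1/\<delta>"
      then have "\<bar>c b\<bar> \<le> 1/\<delta>" using Mxge[of b] by linarith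
      then show "c b \<in> {-(1/\<delta>)..1/\<delta>}" unfolding atLeastAtMost_iff by linarith
    qed
    then have "c \<in> Cube (1/\<delta>)" unfolding Cube_def by (auto simp: c_def PiE_iff)
    then show "x \<in> L ` Cube (1/\<delta>)" using Lc by blast
  qed
  have "L ` Cube (1/\<delta>) \<subseteq> span B" unfolding L_def
  proof (rule image_subsetI)
    fix c
    have "\<And>b. b \<in> B \<Longrightarrow> c b *\<^sub>R b \<in> span B" by (rule span_scale, rule span_base)
    then show "(\<Sum>b\<in>B. c b *\<^sub>R b) \<in> span B" by (rule span_sum)
  qed
  with sub have "sphere 0 1 \<inter> span B = sphere 0 1 \<inter> L ` Cube (1/\<delta>)" by auto
  also have "compact \<dots>" unfolding Cube_def
    by (intro closed_Int_compact compact_continuous_image continuous_on_subset[OF contL] compact_cube) (auto simp: closed_sphere_gen)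
  finally show ?thesis .
qed

lemma findim_compact:
  fixes B :: "'a::real_normed_vector set"
  assumes "finite B"
  shows "compact (sphere 0 1 \<inter> span B)"
proof -
  obtain C where C: "C \<subseteq> B" "independent C" "B \<subseteq> span C" by (rule maximal_independent_subset)
  have "span B = span C" using C by (metis span_eq span_mono span_superset subset_antisym span_span)
  then show ?thesis using findim_compact_indep[OF C(2)] finite_subset[OF C(1) assms] by simp
qed




lemma compact_cube2:
  "compact (PiE UNIV (\<lambda>b::'a. if b \<in> B then {a..M} else {0::real}))"
proof -
  have "compactin (product_topology (\<lambda>i. euclidean) UNIV) (PiE UNIV (\<lambda>b::'a. if b \<in> B then {a..M} else {0::real}))"
    unfolding compactin_PiE by auto
  then show ?thesis by (simp add: euclidean_product_topology)
qed

definition psimplex :: "nat set \<Rightarrow> (nat \<Rightarrow> real) set" where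
  "psimplex I = {p. (\<forall>i. (i \<in> I \<longrightarrow> 0 \<le> p i) \<and> (i \<notin> I \<longrightarrow> p i = 0)) \<and> sum p I = 1}"

definition game_ok :: "nat set \<Rightarrow> nat set \<Rightarrow> (nat \<Rightarrow> nat \<Rightarrow> real) \<Rightarrow> bool" where
  "game_ok R C A \<longleftrightarrow> (\<exists>p q v. p \<in> psimplex R \<and> q \<in> psimplex C \<and>
     (\<forall>j\<in>C. v \<le> (\<Sum>i\<in>R. p i * A i j)) \<and> (\<forall>i\<in>R. (\<Sum>j\<in>C. A i j * q j) \<le> v))"

lemma compact_simplex:
  assumes "finite I" shows "compact (psimplex I)"
proof -
  have eq: "psimplex I = PiE UNIV (\<lambda>i. if i \<in> I then {0..1} else {0::real}) \<inter> {p. sum p I = 1}"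
  proof (intro set_eqI iffI)
    fix p assume p: "p \<in> psimplex I"
    have "\<And>i. i \<in> I \<Longrightarrow> p i \<le> 1"
    proof -
      fix i assume "i \<in> I"
      then have "p i \<le> sum p I" by (rule member_le_sum) (use p assms in \<open>auto simp: psimplex_def\<close>)
      then show "p i \<le> 1" using p unfolding psimplex_def by simp
    qed
    then show "p \<in> PiE UNIV (\<lambda>i. if i \<in> I then {0..1} else {0::real}) \<inter> {p. sum p I = 1}"
      using p unfolding psimplex_def by auto
  next
    fix p assume "p \<in> PiE UNIV (\<lambda>i. if i \<in> I then {0..1} else {0::real}) \<inter> {p. sum p I = 1}"
    then show "p \<in> psimplex I" unfolding psimplex_def by (auto simp: PiE_iff split: if_splits)
  qed
  have "closed {p::nat\<Rightarrow>real. sum p I = 1}"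
    by (rule closed_Collect_eq) (intro continuous_intros)+
  then show ?thesis unfolding eq by (intro compact_Int_closed compact_cube2)
qed

lemma simplex_ne: "i0 \<in> I \<Longrightarrow> finite I \<Longrightarrow> (\<lambda>i. if i = i0 then 1 else 0) \<in> psimplex I"
  unfolding psimplex_def by auto

lemma continuous_on_Min_fun:
  fixes f :: "'b \<Rightarrow> 'a::topological_space \<Rightarrow> real"
  assumes "finite C" "C \<noteq> {}" "\<And>j. j \<in> C \<Longrightarrow> continuous_on S (f j)"
  shows "continuous_on S (\<lambda>x. Min ((\<lambda>j. f j x) ` C))"
  using assms
proof (induction C rule: finite_ne_induct)
  case (singleton x)
  then show ?case by simp
next
  case (insert x F)
  have "continuous_on S (\<lambda>y. min (f x y) (Min ((\<lambda>j. f j y) ` F)))"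
    using continuous_on_min[of S "f x" "\<lambda>y. Min ((\<lambda>j. f j y) ` F)"] insert by auto
  moreover have "\<And>y. Min ((\<lambda>j. f j y) ` insert x F) = min (f x y) (Min ((\<lambda>j. f j y) ` F))"
    using insert by (simp add: Min_insert)
  ultimately show ?case by simp
qed

lemma reduce:
  fixes A :: "nat \<Rightarrow> nat \<Rightarrow> real"
  assumes finR: "finite R" and finC: "finite C" and j0: "j0 \<in> C"
    and ps: "ps \<in> psimplex R"
    and hmax: "\<forall>p\<in>psimplex R. \<exists>j\<in>C. (\<Sum>i\<in>R. p i * A i j) \<le> vv"
    and hps: "\<forall>j\<in>C. vv \<le> (\<Sum>i\<in>R. ps i * A i j)"
    and hj0: "vv < (\<Sum>i\<in>R. ps i * A i j0)"
    and H: "\<forall>q\<in>psimplex C. \<exists>i\<in>R. vv < (\<Sum>j\<in>C. A i j * q j)"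
    and IH: "C - {j0} \<noteq> {} \<Longrightarrow> game_ok R (C - {j0}) A"
  shows False
proof -
  define col where "col = (\<lambda>p j. (\<Sum>i\<in>R. p i * A i j))"
  have "C - {j0} \<noteq> {}"
  proof
    assume "C - {j0} = {}"
    then have "C = {j0}" using j0 by auto
    then show False using hmax ps hj0 by auto
  qed
  then obtain p' q' v' where p': "p' \<in> psimplex R" and q': "q' \<in> psimplex (C - {j0})"
    and colp': "\<forall>j\<in>C - {j0}. v' \<le> col p' j" and rowq': "\<forall>i\<in>R. (\<Sum>j\<in>C - {j0}. A i j * q' j) \<le> v'"
    using IH unfolding game_ok_def col_def by blast
  have q'0: "q' j0 = 0" using q' unfolding psimplex_def by auto
  have rowq'C: "\<And>i. (\<Sum>j\<in>C. A i j * q' j) = (\<Sum>j\<in>C - {j0}. A i j * q' j)"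
    using sum.remove[OF finC j0, of "\<lambda>j. A i j * q' j" for i] q'0 by simp
  have "q' \<in> psimplex C"
    using q' q'0 sum.remove[OF finC j0, of q'] unfolding psimplex_def by auto
  then obtain i where "i \<in> R" "vv < (\<Sum>j\<in>C. A i j * q' j)" using H by blast
  then have v1v': "vv < v'" using rowq' rowq'C by force
  define \<delta> where "\<delta> = col ps j0 - vv"
  define D where "D = \<bar>col p' j0 - col ps j0\<bar>"
  define t where "t = min (1/2) (\<delta> / (2*(D+1)))"
  have \<delta>pos: "\<delta> > 0" using hj0 unfolding \<delta>_def col_def by simp
  have Dnn: "D \<ge> 0" unfolding D_def by simp
  have tpos: "t > 0" unfolding t_def using \<delta>pos Dnn by simp
  have tle: "t \<le> 1/2" unfolding t_def by (rule min.cobounded1)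
  have tD: "t * D \<le> \<delta> / 2"
  proof -
    have "t * D \<le> (\<delta> / (2*(D+1))) * D" unfolding t_def using Dnn by (intro mult_right_mono) auto
    also have "\<dots> = (\<delta>/2) * (D / (D+1))" using Dnn by (simp add: field_simps)
    also have "\<dots> \<le> (\<delta>/2) * 1" using Dnn \<delta>pos by (intro mult_left_mono) auto
    finally show ?thesis by simp
  qed
  define pt where "pt = (\<lambda>i. (1-t) * ps i + t * p' i)"
  have "pt \<in> psimplex R"
  proof -
    have "sum pt R = (1-t) * sum ps R + t * sum p' R"
      unfolding pt_def by (simp add: sum.distrib sum_distrib_left)
    also have "\<dots> = 1" using ps p' unfolding psimplex_def by simp
    finally show ?thesis using ps p' tpos tle unfolding psimplex_def pt_def by auto
  qed
  then obtain j where j: "j \<in> C" "col pt j \<le> vv" using hmax unfolding col_def by blast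
  have colpt: "col pt j = (1-t) * col ps j + t * col p' j"
    unfolding col_def pt_def by (simp add: distrib_right sum.distrib sum_distrib_left mult.assoc)
  show False
  proof (cases "j = j0")
    case True
    have "col pt j = col ps j0 + t * (col p' j0 - col ps j0)" using colpt True by (simp add: algebra_simps)
    moreover have "t * (col p' j0 - col ps j0) \<ge> - (t * D)"
    proof -
      have "- D \<le> col p' j0 - col ps j0" unfolding D_def by linarith
      from mult_left_mono[OF this, of t] tpos show ?thesis by simp
    qed
    ultimately have "col pt j \<ge> col ps j0 - \<delta>/2" using tD by linarith
    moreover have "col ps j0 - \<delta>/2 > vv" using \<delta>pos unfolding \<delta>_def by (simp add: field_simps)
    ultimately show False using j(2) by linarith
  next
    case False
    then have jC': "j \<in> C - {j0}" using j by auto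
    have "(1-t) * vv \<le> (1-t) * col ps j" using hps j tle unfolding col_def by (intro mult_left_mono) auto
    moreover have "t * v' \<le> t * col p' j" using colp' jC' tpos by (intro mult_left_mono) auto
    moreover have "t * vv < t * v'" using v1v' tpos by simp
    ultimately have "col pt j > vv" using colpt by (simp add: algebra_simps)
    then show False using j by simp
  qed
qed


lemma attain_max:
  fixes g :: "(nat \<Rightarrow> real) \<Rightarrow> real"
  assumes "finite R" "R \<noteq> {}" "continuous_on (psimplex R) g"
  shows "\<exists>p\<in>psimplex R. \<forall>p'\<in>psimplex R. g p' \<le> g p"
proof -
  obtain i0 where "i0 \<in> R" using assms by auto
  then have "psimplex R \<noteq> {}" using simplex_ne assms by blast
  then show ?thesis using continuous_attains_sup[OF compact_simplex[OF assms(1)] \<open>psimplex R \<noteq> {}\<close> assms(3)] by blast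
qed

lemma neg_sum_swap: fixes A :: "nat \<Rightarrow> nat \<Rightarrow> real" and C :: "nat set" shows "(\<Sum>j\<in>C. q j * - A i j) = - (\<Sum>j\<in>C. A i j * q j)"
  by (simp add: sum_negf mult.commute)

lemma neg_sum_swap2: fixes A :: "nat \<Rightarrow> nat \<Rightarrow> real" and R :: "nat set" shows "(\<Sum>i\<in>R. - A i j * p i) = - (\<Sum>i\<in>R. p i * A i j)"
  by (simp add: sum_negf mult.commute)

lemma minimax_aux:
  "\<forall>(R::nat set) (C::nat set) (A::nat \<Rightarrow> nat \<Rightarrow> real). card R + card C = n \<longrightarrow> finite R \<longrightarrow> R \<noteq> {} \<longrightarrow> finite C \<longrightarrow> C \<noteq> {} \<longrightarrow> game_ok R C A"
proof (induction n rule: less_induct)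
  case (less n)
  show ?case
  proof (intro allI impI)
  fix R C :: "nat set" and A :: "nat \<Rightarrow> nat \<Rightarrow> real"
  assume nR: "card R + card C = n" and finR: "finite R" and neR: "R \<noteq> {}" and finC: "finite C" and neC: "C \<noteq> {}"
  define col where "col = (\<lambda>p j. (\<Sum>i\<in>R. p i * A i j))"
  define row where "row = (\<lambda>q i. (\<Sum>j\<in>C. A i j * q j))"
  define g1 where "g1 = (\<lambda>p. Min ((\<lambda>j. col p j) ` C))"
  define g2 where "g2 = (\<lambda>q. Min ((\<lambda>i. - row q i) ` R))"
  have "continuous_on (psimplex R) g1" unfolding g1_def col_def
    by (intro continuous_on_Min_fun finC neC continuous_intros)
  then obtain ps where ps: "ps \<in> psimplex R" and psmax: "\<forall>p\<in>psimplex R. g1 p \<le> g1 ps"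
    using attain_max[OF finR neR] by blast
  have "continuous_on (psimplex C) g2" unfolding g2_def row_def
    by (intro continuous_on_Min_fun finR neR continuous_intros)
  then obtain qs where qs: "qs \<in> psimplex C" and qsmax: "\<forall>q\<in>psimplex C. g2 q \<le> g2 qs"
    using attain_max[OF finC neC] by blast
  define v1 where "v1 = g1 ps"
  define v2 where "v2 = - g2 qs"
  have g1in: "\<And>p. \<exists>j\<in>C. g1 p = col p j"
  proof -
    fix p have "g1 p \<in> (\<lambda>j. col p j) ` C" unfolding g1_def using finC neC by (intro Min_in) auto
    then show "\<exists>j\<in>C. g1 p = col p j" by auto
  qed
  have g2in: "\<And>q. \<exists>i\<in>R. g2 q = - row q i"
  proof -
    fix q have "g2 q \<in> (\<lambda>i. - row q i) ` R" unfolding g2_def using finR neR by (intro Min_in) auto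
    then show "\<exists>i\<in>R. g2 q = - row q i" by auto
  qed
  have hps: "\<forall>j\<in>C. v1 \<le> col ps j" unfolding v1_def g1_def using finC by auto
  have hmax: "\<forall>p\<in>psimplex R. \<exists>j\<in>C. col p j \<le> v1"
    using g1in psmax unfolding v1_def by metis
  have hqs: "\<forall>i\<in>R. row qs i \<le> v2"
  proof
    fix i assume "i \<in> R"
    then have "g2 qs \<le> - row qs i" unfolding g2_def using finR by auto
    then show "row qs i \<le> v2" unfolding v2_def by simp
  qed
  have hqmax: "\<forall>q\<in>psimplex C. \<exists>i\<in>R. v2 \<le> row q i"
  proof
    fix q assume "q \<in> psimplex C"
    then have "g2 q \<le> g2 qs" using qsmax by blast
    moreover obtain i where "i \<in> R" "g2 q = - row q i" using g2in by blast
    ultimately show "\<exists>i\<in>R. v2 \<le> row q i" unfolding v2_def by force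
  qed
  show "game_ok R C A"
  proof (cases "v2 \<le> v1")
    case True
    then show ?thesis unfolding game_ok_def using ps qs hps hqs
      by (intro exI[of _ ps] exI[of _ qs] exI[of _ v1]) (auto simp: col_def row_def)
  next
    case False
    then have v12: "v1 < v2" by simp
    consider (c1) j0 where "j0 \<in> C" "v1 < col ps j0" | (c2) i0 where "i0 \<in> R" "row qs i0 < v2"
      | (c3) "\<forall>j\<in>C. col ps j = v1" "\<forall>i\<in>R. row qs i = v2"
      using hps hqs by force
    then show ?thesis
    proof cases
      case c1
      have "False"
      proof (rule reduce[OF finR finC c1(1) ps])
        show "\<forall>p\<in>psimplex R. \<exists>j\<in>C. (\<Sum>i\<in>R. p i * A i j) \<le> v1" using hmax unfolding col_def .
        show "\<forall>j\<in>C. v1 \<le> (\<Sum>i\<in>R. ps i * A i j)" using hps unfolding col_def .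
        show "v1 < (\<Sum>i\<in>R. ps i * A i j0)" using c1 unfolding col_def by simp
        show "\<forall>q\<in>psimplex C. \<exists>i\<in>R. v1 < (\<Sum>j\<in>C. A i j * q j)"
          using hqmax v12 unfolding row_def by force
        show "C - {j0} \<noteq> {} \<Longrightarrow> game_ok R (C - {j0}) A"
        proof -
          have "card C > 0" using c1(1) finC card_gt_0_iff by blast
          then have "card R + card (C - {j0}) < n"
            using c1 finC nR by (simp add: card_Diff_singleton)
          then show "C - {j0} \<noteq> {} \<Longrightarrow> game_ok R (C - {j0}) A" using less.IH finR neR finC by blast
        qed
      qed
      then show ?thesis ..
    next
      case c2
      have "False"
      proof (rule reduce[OF finC finR c2(1) qs, where A = "\<lambda>j i. - A i j" and vv = "- v2"])
        show "\<forall>q\<in>psimplex C. \<exists>i\<in>R. (\<Sum>j\<in>C. q j * - A i j) \<le> - v2"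
          using hqmax unfolding row_def neg_sum_swap by force
        show "\<forall>i\<in>R. - v2 \<le> (\<Sum>j\<in>C. qs j * - A i j)" using hqs unfolding row_def neg_sum_swap by force
        show "- v2 < (\<Sum>j\<in>C. qs j * - A i0 j)" using c2 unfolding row_def neg_sum_swap by simp
        show "\<forall>p\<in>psimplex R. \<exists>j\<in>C. - v2 < (\<Sum>i\<in>R. - A i j * p i)"
          using hmax v12 unfolding col_def neg_sum_swap2 by force
        show "R - {i0} \<noteq> {} \<Longrightarrow> game_ok C (R - {i0}) (\<lambda>j i. - A i j)"
        proof -
          have "card R > 0" using c2(1) finR card_gt_0_iff by blast
          then have "card C + card (R - {i0}) < n"
            using c2 finR nR by (simp add: card_Diff_singleton)
          then show "R - {i0} \<noteq> {} \<Longrightarrow> game_ok C (R - {i0}) (\<lambda>j i. - A i j)" using less.IH finR neC finC by blast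
        qed
      qed
      then show ?thesis ..
    next
      case c3
      have swap: "(\<Sum>j\<in>C. qs j * col ps j) = (\<Sum>i\<in>R. ps i * row qs i)"
        unfolding col_def row_def
        by (simp add: sum_distrib_left sum.swap[of _ C R] mult.commute mult.left_commute)
      have "(\<Sum>j\<in>C. qs j * col ps j) = (\<Sum>j\<in>C. qs j * v1)" using c3 by simp
      also have "\<dots> = v1" using qs unfolding psimplex_def by (simp add: sum_distrib_right[symmetric])
      finally have e1: "(\<Sum>j\<in>C. qs j * col ps j) = v1" .
      have "(\<Sum>i\<in>R. ps i * row qs i) = (\<Sum>i\<in>R. ps i * v2)" using c3 by simp
      also have "\<dots> = v2" using ps unfolding psimplex_def by (simp add: sum_distrib_right[symmetric])
      finally have "(\<Sum>i\<in>R. ps i * row qs i) = v2" .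
      with e1 swap v12 show ?thesis by simp
    qed
  qed
  qed
qed

lemma minimax:
  fixes A :: "nat \<Rightarrow> nat \<Rightarrow> real"
  shows "finite R \<Longrightarrow> R \<noteq> {} \<Longrightarrow> finite C \<Longrightarrow> C \<noteq> {} \<Longrightarrow> game_ok R C A"
  using minimax_aux by blast



lemma sum_list_concat':
  fixes xss :: "real list list"
  shows "sum_list (concat xss) = sum_list (map sum_list xss)"
  by (induct xss) auto

lemma sum_list_map_concat_rep:
  fixes g :: "'a \<Rightarrow> real"
  shows "sum_list (map g (concat (map (\<lambda>i. replicate (c i) (z i)) [0..<k]))) = (\<Sum>i<k. real (c i) * g (z i))"
proof -
  have "sum_list (map g (concat (map (\<lambda>i. replicate (c i) (z i)) [0..<k])))
      = sum_list (map (\<lambda>i. real (c i) * g (z i)) [0..<k])"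
    by (simp add: map_concat sum_list_concat' comp_def sum_list_replicate)
  also have "\<dots> = (\<Sum>i<k. real (c i) * g (z i))"
    by (simp add: sum_list_sum_nth atLeast0LessThan)
  finally show ?thesis .
qed

lemma length_concat_rep:
  "length (concat (map (\<lambda>i. replicate (c i) (z i)) [0..<k])) = (\<Sum>i<k. c i)"
  by (simp add: length_concat comp_def sum_list_sum_nth atLeast0LessThan)

lemma rat_approx:
  fixes z :: "nat \<Rightarrow> 'a" and p :: "nat \<Rightarrow> real"
  assumes k: "k > 0" and pnn: "\<forall>i<k. 0 \<le> p i" and psum: "(\<Sum>i<k. p i) = 1" and eta: "\<eta> > 0"
    and zS: "\<forall>i<k. z i \<in> S"
  shows "\<exists>m w. m \<ge> 1 \<and> (\<forall>j<m. w j \<in> S) \<and> (\<forall>g. (\<forall>s\<in>S. \<bar>g s\<bar> \<le> 2) \<longrightarrow>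
           \<bar>(\<Sum>j<m. g (w j)) / real m - (\<Sum>i<k. p i * g (z i))\<bar> \<le> \<eta>)"
proof -
  obtain M :: nat where M: "real M > 4 * real k / \<eta>" using reals_Archimedean2 by blast
  have Mpos: "real M > 0" using M k eta by (smt (verit) divide_pos_pos of_nat_0_less_iff)
  then have M1: "M \<ge> 1" by simp
  define c where "c = (\<lambda>i. nat \<lfloor>p i * real M\<rfloor>)"
  have cr: "\<And>i. i < k \<Longrightarrow> real (c i) = of_int \<lfloor>p i * real M\<rfloor>"
    unfolding c_def using pnn Mpos by simp
  have c_le: "\<And>i. i < k \<Longrightarrow> real (c i) \<le> p i * real M" using cr by simp
  have c_gt: "\<And>i. i < k \<Longrightarrow> real (c i) > p i * real M - 1"
    using cr real_of_int_floor_gt_diff_one by simp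
  have "(\<Sum>i<k. real (c i)) \<le> (\<Sum>i<k. p i * real M)" using c_le by (intro sum_mono) auto
  also have "\<dots> = real M" using psum by (simp add: sum_distrib_right[symmetric])
  finally have sumc_le: "(\<Sum>i<k. real (c i)) \<le> real M" .
  then have sumc_le_nat: "(\<Sum>i<k. c i) \<le> M" by (simp flip: of_nat_sum)
  define L where "L = M - (\<Sum>i<k. c i)"
  have Lr: "real L = real M - (\<Sum>i<k. real (c i))" unfolding L_def using sumc_le_nat by (simp add: of_nat_diff)
  have "(\<Sum>i<k. p i * real M) - (\<Sum>i<k. real (c i)) \<le> (\<Sum>i<k. 1)"
    unfolding sum_subtractf[symmetric] using c_gt by (intro sum_mono) (smt (verit) lessThan_iff)
  then have L_le: "real L \<le> real k" using Lr psum by (simp add: sum_distrib_right[symmetric])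
  define c' where "c' = (\<lambda>i. c i + (if i = 0 then L else 0))"
  have sumc': "(\<Sum>i<k. c' i) = M"
  proof -
    have "(\<Sum>i<k. c' i) = (\<Sum>i<k. c i) + (\<Sum>i<k. (if i = 0 then L else 0))"
      unfolding c'_def by (simp add: sum.distrib)
    also have "(\<Sum>i<k. (if i = 0 then L else 0)) = L" using k by (simp add: sum.delta)
    finally show ?thesis unfolding L_def using sumc_le_nat by simp
  qed
  define xs where "xs = concat (map (\<lambda>i. replicate (c' i) (z i)) [0..<k])"
  have lenxs: "length xs = M" unfolding xs_def length_concat_rep sumc' ..
  have setxs: "set xs \<subseteq> S" unfolding xs_def using zS by auto
  define w where "w = (\<lambda>j. xs ! j)"
  have wS: "\<forall>j<M. w j \<in> S" unfolding w_def using setxs lenxs nth_mem by blast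
  have err: "\<bar>(\<Sum>j<M. g (w j)) / real M - (\<Sum>i<k. p i * g (z i))\<bar> \<le> \<eta>"
    if g: "\<forall>s\<in>S. \<bar>g s\<bar> \<le> 2" for g
  proof -
    have sg: "(\<Sum>j<M. g (w j)) = (\<Sum>i<k. real (c' i) * g (z i))"
    proof -
      have "(\<Sum>j<M. g (w j)) = sum_list (map g xs)"
        unfolding w_def using lenxs by (simp add: sum_list_sum_nth atLeast0LessThan)
      then show ?thesis unfolding xs_def sum_list_map_concat_rep .
    qed
    define e where "e = (\<lambda>i. real (c' i) - p i * real M)"
    have eb: "\<And>i. i < k \<Longrightarrow> \<bar>e i\<bar> \<le> 1 + (if i = 0 then real L else 0)"
    proof -
      fix i assume i: "i < k"
      have "real L \<ge> 0" by simp
      then show "\<bar>e i\<bar> \<le> 1 + (if i = 0 then real L else 0)"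
        unfolding e_def c'_def using c_le[OF i] c_gt[OF i] by (cases "i = 0") auto
    qed
    have "(\<Sum>j<M. g (w j)) / real M - (\<Sum>i<k. p i * g (z i))
        = (\<Sum>i<k. e i * g (z i)) / real M"
      unfolding sg e_def using Mpos
      by (simp add: field_simps sum_distrib_left sum_divide_distrib sum_subtractf[symmetric] left_diff_distrib)
    moreover have "\<bar>\<Sum>i<k. e i * g (z i)\<bar> \<le> 4 * real k"
    proof -
      have "\<bar>\<Sum>i<k. e i * g (z i)\<bar> \<le> (\<Sum>i<k. \<bar>e i * g (z i)\<bar>)" by (rule sum_abs)
      also have "\<dots> \<le> (\<Sum>i<k. (1 + (if i = 0 then real L else 0)) * 2)"
      proof (intro sum_mono)
        fix i assume "i \<in> {..<k}"
        then have "\<bar>e i\<bar> \<le> 1 + (if i = 0 then real L else 0)" "\<bar>g (z i)\<bar> \<le> 2" using eb g zS by auto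
        then show "\<bar>e i * g (z i)\<bar> \<le> (1 + (if i = 0 then real L else 0)) * 2"
          unfolding abs_mult by (intro mult_mono) auto
      qed
      also have "\<dots> = (\<Sum>i<k. 2) + (\<Sum>i<k. (if i = 0 then 2 * real L else 0))"
      proof -
        have "\<And>i. (1 + (if i = 0 then real L else 0)) * 2 = 2 + (if i = 0 then 2 * real L else 0)" by simp
        then show ?thesis unfolding sum.distrib[symmetric] by (intro sum.cong) auto
      qed
      also have "\<dots> = 2 * real k + 2 * real L"
        using k by (simp add: sum.delta)
      finally show ?thesis using L_le by simp
    qed
    ultimately have "\<bar>(\<Sum>j<M. g (w j)) / real M - (\<Sum>i<k. p i * g (z i))\<bar> \<le> 4 * real k / real M"
      using Mpos by (simp add: abs_divide divide_right_mono)
    also have "\<dots> \<le> \<eta>" using M Mpos eta by (simp add: field_simps)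
    finally show ?thesis .
  qed
  show ?thesis using M1 wS err by blast
qed



lemma approx_minimax:
  fixes S :: "'a::real_normed_vector set"
  assumes cS: "compact S" and neS: "S \<noteq> {}" and S1: "S \<subseteq> cball 0 1" and e: "e > 0"
  shows "\<exists>m w m' u. m \<ge> 1 \<and> (\<forall>j<m. w j \<in> S) \<and> m' \<ge> 1 \<and> (\<forall>j<m'. u j \<in> S) \<and>
     (\<forall>x\<in>S. \<forall>y\<in>S. (\<Sum>j<m'. norm (y - u j)) / real m' \<le> (\<Sum>j<m. norm (x - w j)) / real m + e)"
proof -
  define \<eta> where "\<eta> = e / 4"
  have eta: "\<eta> > 0" unfolding \<eta>_def using e by simp
  have "\<exists>N. finite N \<and> N \<subseteq> S \<and> S \<subseteq> (\<Union>x\<in>N. ball x \<eta>)"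
    using seq_compact_imp_totally_bounded[OF compact_imp_seq_compact[OF cS], rule_format, OF eta] .
  then obtain N where N: "finite N" "N \<subseteq> S" "S \<subseteq> (\<Union>x\<in>N. ball x \<eta>)" by blast
  obtain k :: nat and z :: "nat \<Rightarrow> 'a" where Nimg0: "N = z ` {i. i < k}"
    using finite_imp_nat_seg_image_inj_on[OF N(1)] by blast
  have Nimg: "N = z ` {..<k}" using Nimg0 by (simp add: lessThan_def)
  have "N \<noteq> {}" using N neS by auto
  have k: "k > 0"
  proof (rule ccontr)
    assume "\<not> k > 0"
    then have "k = 0" by simp
    then have "N = {}" using Nimg by simp
    then show False using \<open>N \<noteq> {}\<close> by simp
  qed
  have zS: "\<forall>i<k. z i \<in> S" using Nimg N by auto
  have cover: "\<And>x. x \<in> S \<Longrightarrow> \<exists>i<k. norm (x - z i) < \<eta>"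
  proof -
    fix x assume "x \<in> S"
    then obtain n where "n \<in> N" "x \<in> ball n \<eta>" using N by blast
    then obtain i where i: "i < k" "n = z i" using Nimg by blast
    then have "norm (x - z i) < \<eta>" using \<open>x \<in> ball n \<eta>\<close> by (simp add: dist_norm norm_minus_commute)
    then show "\<exists>i<k. norm (x - z i) < \<eta>" using i by blast
  qed
  have normS: "\<And>x. x \<in> S \<Longrightarrow> norm x \<le> 1" using S1 by auto
  define A where "A = (\<lambda>i j. norm (z i - z j))"
  obtain p q v where p: "p \<in> psimplex {..<k}" and q: "q \<in> psimplex {..<k}"
    and colp: "\<forall>j\<in>{..<k}. v \<le> (\<Sum>i\<in>{..<k}. p i * A i j)"
    and rowq: "\<forall>i\<in>{..<k}. (\<Sum>j\<in>{..<k}. A i j * q j) \<le> v"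
    using minimax[of "{..<k}" "{..<k}" A] k unfolding game_ok_def by blast
  have pnn: "\<forall>i<k. 0 \<le> p i" and psum: "(\<Sum>i<k. p i) = 1" using p unfolding psimplex_def by auto
  have qnn: "\<forall>i<k. 0 \<le> q i" and qsum: "(\<Sum>i<k. q i) = 1" using q unfolding psimplex_def by auto
  obtain m w where m: "m \<ge> 1" and wS: "\<forall>j<m. w j \<in> S"
    and werr: "\<forall>g. (\<forall>s\<in>S. \<bar>g s\<bar> \<le> 2) \<longrightarrow> \<bar>(\<Sum>j<m. g (w j)) / real m - (\<Sum>i<k. p i * g (z i))\<bar> \<le> \<eta>"
    using rat_approx[OF k pnn psum eta zS] by blast
  obtain m' u where m': "m' \<ge> 1" and uS: "\<forall>j<m'. u j \<in> S"
    and uerr: "\<forall>g. (\<forall>s\<in>S. \<bar>g s\<bar> \<le> 2) \<longrightarrow> \<bar>(\<Sum>j<m'. g (u j)) / real m' - (\<Sum>i<k. q i * g (z i))\<bar> \<le> \<eta>"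
    using rat_approx[OF k qnn qsum eta zS] by blast
  have gb: "\<forall>s\<in>S. \<bar>norm (x - s)\<bar> \<le> 2" if "x \<in> S" for x
  proof
    fix s assume "s \<in> S"
    have "norm (x - s) \<le> norm x + norm s" by (rule norm_triangle_ineq4)
    then show "\<bar>norm (x - s)\<bar> \<le> 2" using normS[OF that] normS[OF \<open>s \<in> S\<close>] by simp
  qed
  have lowp: "(\<Sum>i<k. p i * norm (x - z i)) \<ge> v - \<eta>" if x: "x \<in> S" for x
  proof -
    obtain i where i: "i < k" "norm (x - z i) < \<eta>" using cover[OF x] by blast
    have "(\<Sum>i'<k. p i' * A i' i) - \<eta> = (\<Sum>i'<k. p i' * A i' i - p i' * \<eta>)"
      using psum by (simp add: sum_subtractf sum_distrib_right[symmetric])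
    also have "\<dots> \<le> (\<Sum>i'<k. p i' * norm (x - z i'))"
    proof (intro sum_mono)
      fix i' assume "i' \<in> {..<k}"
      have "A i' i \<le> norm (x - z i') + norm (x - z i)" unfolding A_def
        using norm_triangle_ineq4[of "z i' - x" "z i - x"] by (simp add: norm_minus_commute)
      then have "A i' i - \<eta> \<le> norm (x - z i')" using i by linarith
      then have "p i' * (A i' i - \<eta>) \<le> p i' * norm (x - z i')"
        using pnn \<open>i' \<in> {..<k}\<close> by (intro mult_left_mono) auto
      then show "p i' * A i' i - p i' * \<eta> \<le> p i' * norm (x - z i')" by (simp add: algebra_simps)
    qed
    finally show ?thesis using colp i by force
  qed
  have upq: "(\<Sum>j<k. q j * norm (y - z j)) \<le> v + \<eta>" if y: "y \<in> S" for y
  proof -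
    obtain i where i: "i < k" "norm (y - z i) < \<eta>" using cover[OF y] by blast
    have "(\<Sum>j<k. q j * norm (y - z j)) \<le> (\<Sum>j<k. A i j * q j + q j * \<eta>)"
    proof (intro sum_mono)
      fix j assume "j \<in> {..<k}"
      have "norm (y - z j) \<le> A i j + norm (y - z i)" unfolding A_def
        using norm_triangle_ineq[of "y - z i" "z i - z j"] by simp
      then have "norm (y - z j) \<le> A i j + \<eta>" using i by linarith
      then have "q j * norm (y - z j) \<le> q j * (A i j + \<eta>)"
        using qnn \<open>j \<in> {..<k}\<close> by (intro mult_left_mono) auto
      then show "q j * norm (y - z j) \<le> A i j * q j + q j * \<eta>" by (simp add: algebra_simps)
    qed
    also have "\<dots> = (\<Sum>j<k. A i j * q j) + \<eta>"
      using qsum by (simp add: sum.distrib sum_distrib_right[symmetric])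
    finally show ?thesis using rowq i by force
  qed
  have main: "(\<Sum>j<m'. norm (y - u j)) / real m' \<le> (\<Sum>j<m. norm (x - w j)) / real m + e"
    if x: "x \<in> S" and y: "y \<in> S" for x y
  proof -
    have a1: "\<bar>(\<Sum>j<m. norm (x - w j)) / real m - (\<Sum>i<k. p i * norm (x - z i))\<bar> \<le> \<eta>"
      using werr[rule_format, of "\<lambda>s. norm (x - s)"] gb[OF x] by blast
    have a2: "\<bar>(\<Sum>j<m'. norm (y - u j)) / real m' - (\<Sum>i<k. q i * norm (y - z i))\<bar> \<le> \<eta>"
      using uerr[rule_format, of "\<lambda>s. norm (y - s)"] gb[OF y] by blast
    have "\<eta> * 4 = e" unfolding \<eta>_def by simp
    then show ?thesis using abs_le_D1[OF a1] abs_le_D2[OF a1] abs_le_D1[OF a2] abs_le_D2[OF a2] lowp[OF x] upq[OF y]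
      by linarith
  qed
  show ?thesis using m wS m' uS main by blast
qed


lemma hull_interval:
  fixes T :: "real set" assumes ne: "T \<noteq> {}" and bd: "bounded T"
  shows "closure (convex hull T) = {Inf T..Sup T}"
proof
  have ba: "bdd_above T" and bb: "bdd_below T" using bd by (auto simp: bounded_imp_bdd_above bounded_imp_bdd_below)
  have "T \<subseteq> {Inf T..Sup T}" using ba bb by (auto intro: cInf_lower cSup_upper)
  then have "convex hull T \<subseteq> {Inf T..Sup T}" by (intro hull_minimal) (auto simp: convex_real_interval)
  then show "closure (convex hull T) \<subseteq> {Inf T..Sup T}" by (intro closure_minimal) auto
next
  have ba: "bdd_above T" and bb: "bdd_below T" using bd by (auto simp: bounded_imp_bdd_above bounded_imp_bdd_below)
  have sub: "closure T \<subseteq> closure (convex hull T)" by (intro closure_mono hull_subset)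
  show "{Inf T..Sup T} \<subseteq> closure (convex hull T)"
  proof
    fix x assume x: "x \<in> {Inf T..Sup T}"
    show "x \<in> closure (convex hull T)"
    proof (cases "x = Sup T \<or> x = Inf T")
      case True
      then show ?thesis using closure_contains_Sup[OF ne ba] closure_contains_Inf[OF ne bb] sub by auto
    next
      case False
      then have "Inf T < x" "x < Sup T" using x by auto
      then obtain a b where ab: "a \<in> T" "a < x" "b \<in> T" "x < b"
        using cInf_less_iff[OF ne bb] less_cSup_iff[OF ne ba] by metis
      have "x \<in> closed_segment a b" using ab by (auto simp: closed_segment_eq_real_ivl)
      also have "closed_segment a b \<subseteq> convex hull T"
        unfolding segment_convex_hull using ab by (intro hull_mono) auto
      finally show ?thesis using closure_subset by blast
    qed
  qed
qed

lemma avg_bounds: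
  fixes S :: "'a::real_normed_vector set"
  assumes S1: "S \<subseteq> cball 0 1" and wS: "\<forall>j<m. w j \<in> S" and x: "x \<in> S"
  shows "0 \<le> (\<Sum>j<m. norm (x - w j)) / real m" "(\<Sum>j<m. norm (x - w j)) / real m \<le> 2"
proof -
  show "0 \<le> (\<Sum>j<m. norm (x - w j)) / real m" by (simp add: sum_nonneg)
  have "(\<Sum>j<m. norm (x - w j)) \<le> (\<Sum>j<m. 2)"
  proof (rule sum_mono)
    fix j assume "j \<in> {..<m}"
    then have "norm (w j) \<le> 1" "norm x \<le> 1" using wS x S1 by auto
    then show "norm (x - w j) \<le> 2" using norm_triangle_ineq4[of x "w j"] by linarith
  qed
  then show "(\<Sum>j<m. norm (x - w j)) / real m \<le> 2"
    by (cases "m = 0") (auto simp: divide_simps)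
qed

lemma avg_image_bounded:
  fixes S :: "'a::real_normed_vector set"
  assumes S1: "S \<subseteq> cball 0 1" and wS: "\<forall>j<m. w j \<in> S"
  shows "bounded ((\<lambda>x. (\<Sum>j<m. norm (x - w j)) / real m) ` S)"
proof -
  have "\<forall>y\<in>(\<lambda>x. (\<Sum>j<m. norm (x - w j)) / real m) ` S. norm y \<le> 2"
  proof
    fix y assume "y \<in> (\<lambda>x. (\<Sum>j<m. norm (x - w j)) / real m) ` S"
    then obtain x where x: "x \<in> S" "y = (\<Sum>j<m. norm (x - w j)) / real m" by blast
    have "0 \<le> y" "y \<le> 2" using avg_bounds[OF S1 wS x(1)] x(2) by auto
    then show "norm y \<le> 2" by simp
  qed
  then show ?thesis unfolding bounded_iff by blast
qed

lemma double_avg: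
  fixes w u :: "nat \<Rightarrow> 'a::real_normed_vector"
  assumes "m \<ge> 1" "m' \<ge> 1"
  shows "(\<Sum>i<m'. (\<Sum>j<m. norm (u i - w j)) / real m) * real m =
         (\<Sum>j<m. (\<Sum>i<m'. norm (w j - u i)) / real m') * real m'"
proof -
  have "(\<Sum>i<m'. (\<Sum>j<m. norm (u i - w j)) / real m) * real m = (\<Sum>i<m'. \<Sum>j<m. norm (u i - w j))"
    using assms by (simp add: sum_divide_distrib[symmetric])
  also have "\<dots> = (\<Sum>j<m. \<Sum>i<m'. norm (w j - u i))"
    by (subst sum.swap) (simp add: norm_minus_commute)
  also have "\<dots> = (\<Sum>j<m. (\<Sum>i<m'. norm (w j - u i)) / real m') * real m'"
    using assms by (simp add: sum_divide_distrib[symmetric])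
  finally show ?thesis .
qed

lemma Rset_singleton:
  fixes S :: "'a::real_normed_vector set"
  assumes cS: "compact S" and neS: "S \<noteq> {}" and S1: "S \<subseteq> cball 0 1"
  shows "\<exists>r. R_set S = {r}"
proof -
  define f where "f = (\<lambda>m (w::nat\<Rightarrow>'a) x. (\<Sum>j<m. norm (x - w j)) / real m)"
  define W where "W = {(m, w). m \<ge> (1::nat) \<and> (\<forall>j<m. w j \<in> S)}"
  define lo where "lo = (\<lambda>m w. Inf (f m w ` S))"
  define hi where "hi = (\<lambda>m w. Sup (f m w ` S))"
  have bnd: "bounded (f m w ` S)" if "(m, w) \<in> W" for m w
    using avg_image_bounded[OF S1] that unfolding W_def f_def by auto
  have ba: "bdd_above (f m w ` S)" and bb: "bdd_below (f m w ` S)" if "(m, w) \<in> W" for m w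
    using bnd[OF that] by (auto simp: bounded_imp_bdd_above bounded_imp_bdd_below)
  have neI: "f m w ` S \<noteq> {}" for m w using neS by auto
  have int: "closure (convex hull (f m w ` S)) = {lo m w..hi m w}" if "(m, w) \<in> W" for m w
    unfolding lo_def hi_def by (rule hull_interval[OF neI bnd[OF that]])
  have Rdef: "R_set S = (\<Inter>(m, w)\<in>W. closure (convex hull (f m w ` S)))"
    unfolding R_set_def W_def f_def by auto
  have key: "lo m w \<le> hi m' u" if mw: "(m, w) \<in> W" and mu: "(m', u) \<in> W" for m w m' u
  proof -
    have m: "m \<ge> 1" and wS: "\<forall>j<m. w j \<in> S" and m': "m' \<ge> 1" and uS: "\<forall>j<m'. u j \<in> S"
      using mw mu unfolding W_def by auto
    have "(\<Sum>i<m'. lo m w) \<le> (\<Sum>i<m'. f m w (u i))"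
      unfolding lo_def using uS bb[OF mw] by (intro sum_mono cInf_lower) auto
    moreover have "(\<Sum>j<m. f m' u (w j)) \<le> (\<Sum>j<m. hi m' u)"
      unfolding hi_def using wS ba[OF mu] by (intro sum_mono cSup_upper) auto
    moreover have "(\<Sum>i<m'. f m w (u i)) * real m = (\<Sum>j<m. f m' u (w j)) * real m'"
      unfolding f_def by (rule double_avg[OF m m'])
    ultimately have A1: "real m' * lo m w \<le> (\<Sum>i<m'. f m w (u i))"
      and A2: "(\<Sum>j<m. f m' u (w j)) \<le> real m * hi m' u"
      and A3: "(\<Sum>i<m'. f m w (u i)) * real m = (\<Sum>j<m. f m' u (w j)) * real m'" by auto
    have "real m' * lo m w * real m \<le> (\<Sum>i<m'. f m w (u i)) * real m"
      using A1 by (rule mult_right_mono) simp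
    also have "\<dots> = (\<Sum>j<m. f m' u (w j)) * real m'" by (rule A3)
    also have "\<dots> \<le> real m * hi m' u * real m'" using A2 by (rule mult_right_mono) simp
    finally have "(real m * real m') * lo m w \<le> (real m * real m') * hi m' u"
      by (simp add: algebra_simps)
    moreover have "real m * real m' > 0" using m m' by simp
    ultimately show ?thesis by (rule mult_left_le_imp_le)
  qed
  have W1: "(1, \<lambda>j. s) \<in> W" if "s \<in> S" for s using that unfolding W_def by auto
  obtain s0 where s0: "s0 \<in> S" using neS by auto
  define L where "L = {lo m w | m w. (m, w) \<in> W}"
  define r where "r = Sup L"
  have neL: "L \<noteq> {}" unfolding L_def using W1[OF s0] by blast
  have baL: "bdd_above L" unfolding L_def bdd_above_def using key W1[OF s0] by blast
  have r_lo: "lo m w \<le> r" if "(m, w) \<in> W" for m w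
    unfolding r_def using that baL by (intro cSup_upper) (auto simp: L_def)
  have r_hi: "r \<le> hi m w" if "(m, w) \<in> W" for m w
    unfolding r_def using neL key that by (intro cSup_least) (auto simp: L_def)
  have rin: "r \<in> R_set S" unfolding Rdef using int r_lo r_hi by auto
  have uniq: "y = r" if y: "y \<in> R_set S" for y
  proof -
    have yin: "y \<in> {lo m w..hi m w}" if "(m, w) \<in> W" for m w
      using y int[OF that] that unfolding Rdef by auto
    have "\<bar>y - r\<bar> \<le> e" if e: "e > 0" for e
    proof -
      obtain m w m' u where mw: "(m, w) \<in> W" and mu: "(m', u) \<in> W"
        and H: "\<forall>x\<in>S. \<forall>y\<in>S. f m' u y \<le> f m w x + e"
        using approx_minimax[OF cS neS S1 e] unfolding W_def f_def by blast
      have "hi m' u \<le> lo m w + e"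
      proof -
        have "\<forall>y\<in>S. f m' u y - e \<le> lo m w"
          unfolding lo_def using H neI by (intro ballI cInf_greatest) (auto simp: algebra_simps)
        then have "\<forall>y\<in>S. f m' u y \<le> lo m w + e" by (auto simp: algebra_simps)
        then show ?thesis unfolding hi_def using neI by (intro cSup_least) auto
      qed
      then show ?thesis using yin[OF mw] yin[OF mu] r_lo[OF mw] r_hi[OF mu] by auto
    qed
    then show "y = r"
      by (metis abs_le_zero_iff abs_ge_zero field_le_epsilon add_0 eq_iff_diff_eq_0)
  qed
  show ?thesis using rin uniq by blast
qed

lemma rnum_in:
  fixes S :: "'a::real_normed_vector set"
  assumes "compact S" "S \<noteq> {}" "S \<subseteq> cball 0 1"
  shows "r_num S \<in> R_set S"
proof -
  obtain r where r: "R_set S = {r}" using Rset_singleton[OF assms] by blast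
  have "r_num S = r" unfolding r_num_def r by (rule the_equality) auto
  then show ?thesis using r by simp
qed


lemma Rset_mem:
  fixes S :: "'a::real_normed_vector set"
  assumes "m \<ge> 1" "\<forall>j<m. w j \<in> S" "y \<in> R_set S"
  shows "y \<in> closure (convex hull ((\<lambda>x. (\<Sum>j<m. norm (x - w j)) / real m) ` S))"
  using assms unfolding R_set_def by blast

lemma mono_X:
  assumes incr: "\<And>n. X n \<subseteq> X (Suc n)" and "n \<le> n'"
  shows "X n \<subseteq> X n'"
  using assms(2) by (induction rule: dec_induct) (use incr in auto)

theorem corollary4p6:
  fixes X :: "nat \<Rightarrow> 'a::real_normed_vector set" and \<rho> :: real
  assumes fin_dim: "\<And>n. \<exists>B. finite B \<and> X n = span B"
    and incr: "\<And>n. X n \<subseteq> X (Suc n)"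
    and dense: "closure (\<Union>n. X n) = UNIV"
    and acc: "\<exists>\<sigma>::nat \<Rightarrow> nat. strict_mono \<sigma> \<and>
               ((\<lambda>k. r_num (unit_sphere_of (X (\<sigma> k)))) \<longlonglongrightarrow> \<rho>)"
  shows "\<rho> \<in> calR TYPE('a)"
proof -
  obtain \<sigma> :: "nat \<Rightarrow> nat" where \<sigma>: "strict_mono \<sigma>"
    and lim: "(\<lambda>k. r_num (unit_sphere_of (X (\<sigma> k)))) \<longlonglongrightarrow> \<rho>" using acc by blast
  have "\<exists>Bf. \<forall>n. finite (Bf n) \<and> X n = span (Bf n)" by (rule choice) (use fin_dim in blast)
  then obtain Bf where Bf: "\<And>n. finite (Bf n) \<and> X n = span (Bf n)" by blast
  have cUS: "compact (unit_sphere_of (X n))" for n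
  proof -
    have "unit_sphere_of (X n) = sphere 0 1 \<inter> span (Bf n)" using Bf[of n] unfolding unit_sphere_of_def by simp
    then show ?thesis using findim_compact[of "Bf n"] Bf[of n] by simp
  qed
  have US1: "unit_sphere_of (X n) \<subseteq> cball 0 1" for n unfolding unit_sphere_of_def by auto
  define Sph where "Sph = sphere (0::'a) 1"
  have Sph1: "Sph \<subseteq> cball 0 1" unfolding Sph_def by auto
  show ?thesis unfolding calR_def R_set_def
  proof (intro InterI, clarify)
    fix m :: nat and w :: "nat \<Rightarrow> 'a"
    assume m: "1 \<le> m" and wS: "\<forall>j<m. w j \<in> sphere 0 1"
    then have wS': "\<forall>j<m. w j \<in> Sph" unfolding Sph_def by simp
    define f where "f = (\<lambda>(u::nat \<Rightarrow> 'a) x. (\<Sum>j<m. norm (x - u j)) / real m)"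
    have neSph: "Sph \<noteq> {}" using wS' m by auto
    have bndS: "bounded (f w ` Sph)" unfolding f_def by (rule avg_image_bounded[OF Sph1 wS'])
    have bbS: "bdd_below (f w ` Sph)" and baS: "bdd_above (f w ` Sph)"
      using bndS by (auto simp: bounded_imp_bdd_above bounded_imp_bdd_below)
    define lo where "lo = Inf (f w ` Sph)"
    define hi where "hi = Sup (f w ` Sph)"
    have main: "lo - e \<le> \<rho> \<and> \<rho> \<le> hi + e" if e: "e > 0" for e
    proof -
      define e' where "e' = min (1/2) (e/4)"
      have e'pos: "e' > 0" and e'le: "e' \<le> 1/2" and e'e: "2 * e' \<le> e/2" using e unfolding e'_def by auto
      have "\<forall>j. \<exists>n y. j < m \<longrightarrow> y \<in> X n \<and> norm (y - w j) < e'"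
      proof
        fix j
        show "\<exists>n y. j < m \<longrightarrow> y \<in> X n \<and> norm (y - w j) < e'"
        proof -
          have "w j \<in> closure (\<Union>n. X n)" using dense by simp
          then obtain y where "y \<in> (\<Union>n. X n)" "dist y (w j) < e'"
            using closure_approachable e'pos by blast
          then show ?thesis by (auto simp: dist_norm)
        qed
      qed
      then have "\<exists>nn. \<forall>j. \<exists>y. j < m \<longrightarrow> y \<in> X (nn j) \<and> norm (y - w j) < e'" by (rule choice)
      then obtain nn where "\<forall>j. \<exists>y. j < m \<longrightarrow> y \<in> X (nn j) \<and> norm (y - w j) < e'" by blast
      then have "\<exists>yy. \<forall>j. j < m \<longrightarrow> yy j \<in> X (nn j) \<and> norm (yy j - w j) < e'" by (rule choice)
      then obtain yy where nnyy: "\<And>j. j < m \<Longrightarrow> yy j \<in> X (nn j) \<and> norm (yy j - w j) < e'" by blast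
      define N where "N = Max (nn ` {..<m})"
      have nnN: "\<And>j. j < m \<Longrightarrow> nn j \<le> N" unfolding N_def by auto
      define u where "u = (\<lambda>j. (1 / norm (yy j)) *\<^sub>R yy j)"
      have yynorm: "norm (yy j) > 1/2" if j: "j < m" for j
      proof -
        have "norm (w j) = 1" using wS j by auto
        moreover have "norm (w j) \<le> norm (yy j) + norm (yy j - w j)"
          using norm_triangle_ineq4[of "yy j" "yy j - w j"] by simp
        ultimately show ?thesis using nnyy[OF j] e'le by linarith
      qed
      have u_norm: "norm (u j) = 1" if j: "j < m" for j
      proof -
        have "norm (yy j) > 0" using yynorm[OF j] by linarith
        then show ?thesis unfolding u_def by simp
      qed
      have u_close: "norm (u j - w j) \<le> 2 * e'" if j: "j < m" for j
      proof -
        have ny: "norm (yy j) > 0" using yynorm[OF j] by linarith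
        have "u j - yy j = (1 / norm (yy j) - 1) *\<^sub>R yy j" unfolding u_def by (simp add: algebra_simps)
        then have "norm (u j - yy j) = \<bar>1 / norm (yy j) - 1\<bar> * norm (yy j)" by simp
        also have "\<dots> = \<bar>1 - norm (yy j)\<bar>" using ny
          by (simp add: abs_mult[symmetric] algebra_simps divide_simps)
        also have "\<dots> = \<bar>norm (w j) - norm (yy j)\<bar>" using wS j by auto
        also have "\<dots> \<le> norm (w j - yy j)" by (rule norm_triangle_ineq3)
        also have "\<dots> < e'" using nnyy[OF j] by (simp add: norm_minus_commute)
        finally have "norm (u j - yy j) < e'" .
        moreover have "norm (u j - w j) \<le> norm (u j - yy j) + norm (yy j - w j)"
          using norm_triangle_ineq[of "u j - yy j" "yy j - w j"] by simp
        ultimately show ?thesis using nnyy[OF j] by linarith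
      qed
      have u_in: "u j \<in> unit_sphere_of (X n)" if j: "j < m" and n: "n \<ge> N" for j n
      proof -
        have "yy j \<in> X n" using nnyy[OF j] mono_X[of X, OF incr, of "nn j" n] nnN[OF j] n by auto
        then have "yy j \<in> span (Bf n)" using Bf[of n] by simp
        then have "(1 / norm (yy j)) *\<^sub>R yy j \<in> span (Bf n)" by (rule span_scale)
        then have "u j \<in> X n" unfolding u_def using Bf[of n] by simp
        then show ?thesis unfolding unit_sphere_of_def using u_norm[OF j] by simp
      qed
      have fdiff: "\<bar>f u x - f w x\<bar> \<le> e/2" for x
      proof -
        have "\<bar>(\<Sum>j<m. norm (x - u j)) - (\<Sum>j<m. norm (x - w j))\<bar> \<le> (\<Sum>j<m. \<bar>norm (x - u j) - norm (x - w j)\<bar>)"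
          unfolding sum_subtractf[symmetric] by (rule sum_abs)
        also have "\<dots> \<le> (\<Sum>j<m. 2 * e')"
        proof (rule sum_mono)
          fix j assume "j \<in> {..<m}"
          then have "norm (u j - w j) \<le> 2 * e'" using u_close by auto
          moreover have "\<bar>norm (x - u j) - norm (x - w j)\<bar> \<le> norm ((x - u j) - (x - w j))"
            by (rule norm_triangle_ineq3)
          ultimately show "\<bar>norm (x - u j) - norm (x - w j)\<bar> \<le> 2 * e'"
            by (simp add: norm_minus_commute)
        qed
        also have "\<dots> = real m * (2 * e')" by simp
        finally have "\<bar>(\<Sum>j<m. norm (x - u j)) - (\<Sum>j<m. norm (x - w j))\<bar> \<le> real m * (2 * e')" .
        then have "\<bar>f u x - f w x\<bar> \<le> 2 * e'" unfolding f_def using m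
          by (simp add: diff_divide_distrib[symmetric] abs_divide divide_simps mult.commute)
        then show ?thesis using e'e by linarith
      qed
      have ev: "lo - e \<le> r_num (unit_sphere_of (X (\<sigma> k))) \<and> r_num (unit_sphere_of (X (\<sigma> k))) \<le> hi + e"
        if k: "k \<ge> N" for k
      proof -
        define Sk where "Sk = unit_sphere_of (X (\<sigma> k))"
        have "\<sigma> k \<ge> N" using k seq_suble[OF \<sigma>, of k] by linarith
        then have uSk: "\<forall>j<m. u j \<in> Sk" unfolding Sk_def using u_in by simp
        have neSk: "Sk \<noteq> {}" using uSk m by auto
        have SkSph: "Sk \<subseteq> Sph" unfolding Sk_def Sph_def unit_sphere_of_def by auto
        have "r_num Sk \<in> R_set Sk" unfolding Sk_def
          by (rule rnum_in[OF cUS _ US1]) (use neSk in \<open>simp add: Sk_def\<close>)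
        then have rmem: "r_num Sk \<in> closure (convex hull (f u ` Sk))"
          unfolding f_def by (rule Rset_mem[OF m uSk])
        have bdk: "bounded (f u ` Sk)" unfolding f_def Sk_def
          by (rule avg_image_bounded[OF US1]) (use uSk in \<open>simp add: Sk_def\<close>)
        have eqk: "closure (convex hull (f u ` Sk)) = {Inf (f u ` Sk)..Sup (f u ` Sk)}"
          by (rule hull_interval[OF _ bdk]) (use neSk in simp)
        have "r_num Sk \<in> {Inf (f u ` Sk)..Sup (f u ` Sk)}" using rmem eqk by simp
        then have rk: "Inf (f u ` Sk) \<le> r_num Sk" "r_num Sk \<le> Sup (f u ` Sk)" by auto
        have "lo - e \<le> Inf (f u ` Sk)"
        proof (rule cInf_greatest)
          show "f u ` Sk \<noteq> {}" using neSk by simp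
          fix t assume "t \<in> f u ` Sk"
          then obtain x where x: "x \<in> Sk" "t = f u x" by blast
          have "lo \<le> f w x" unfolding lo_def using x SkSph bbS by (intro cInf_lower) auto
          then show "lo - e \<le> t" using fdiff[of x] x e by linarith
        qed
        moreover have "Sup (f u ` Sk) \<le> hi + e"
        proof (rule cSup_least)
          show "f u ` Sk \<noteq> {}" using neSk by simp
          fix t assume "t \<in> f u ` Sk"
          then obtain x where x: "x \<in> Sk" "t = f u x" by blast
          have "f w x \<le> hi" unfolding hi_def using x SkSph baS by (intro cSup_upper) auto
          then show "t \<le> hi + e" using fdiff[of x] x e by linarith
        qed
        ultimately show ?thesis using rk unfolding Sk_def by linarith
      qed
      have "\<forall>k\<ge>N. lo - e \<le> r_num (unit_sphere_of (X (\<sigma> k)))" using ev by simp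
      then have "lo - e \<le> \<rho>" using LIMSEQ_le_const[OF lim] by blast
      moreover have "\<forall>k\<ge>N. r_num (unit_sphere_of (X (\<sigma> k))) \<le> hi + e" using ev by simp
      then have "\<rho> \<le> hi + e" using LIMSEQ_le_const2[OF lim] by blast
      ultimately show ?thesis by simp
    qed
    have "lo \<le> \<rho>"
    proof (rule field_le_epsilon)
      fix e :: real assume "e > 0" then show "lo \<le> \<rho> + e" using main[of e] by linarith
    qed
    moreover have "\<rho> \<le> hi"
    proof (rule field_le_epsilon)
      fix e :: real assume "e > 0" then show "\<rho> \<le> hi + e" using main[of e] by linarith
    qed
    ultimately have "\<rho> \<in> {lo..hi}" by simp
    also have "{lo..hi} = closure (convex hull (f w ` Sph))"
      unfolding lo_def hi_def by (rule hull_interval[OF _ bndS, symmetric]) (use neSph in simp)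
    finally show "\<rho> \<in> closure (convex hull ((\<lambda>x. (\<Sum>j<m. norm (x - w j)) / real m) ` sphere 0 1))"
      unfolding f_def Sph_def by simp
  qed
qed

end
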